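(* (a) The integers $n>1$ with exactly one distinct prime divisor satisfying $F_n=D_n$ are exactly the powers $2^k$, $k\ge1$. (b) If $n$ has exactly two distinct prime divisors and $F_n=D_n$, then $n=2^k(2^k+1)^j$ for some positive integers $k,j$ with $2^k+1$ prime.
   Context: For a composite integer $m$, let $d(m)$ denote the largest divisor of $m$ with $1<d(m)<m$. Define $f$ on integers $m>1$ by $f(m)=m-1$ if $m$ is prime and $f(m)=m-d(m)$ if $m$ is composite. Let $f^{(0)}(m)=m$, $f^{(i)}=f\circ f^{(i-1)}$. Define $F_m=\{m,f(m),f^{(2)}(m),\dots,1\}$, the set of iterates of $f$ from $m$ up to and including the first occurrence of $1$, and let $D_m$ be the set of positive divisors of $m$. *)

theory Defs
  imports "HOL-Computational_Algebra.Primes"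
begin

text \<open>Largest divisor d of m with 1 < d < m (meaningful for composite m).\<close>
definition ld :: "nat \<Rightarrow> nat" where
  "ld m = Max {d. d dvd m \<and> 1 < d \<and> d < m}"

text \<open>f(m) = m - 1 if m prime, m - d(m) otherwise (only used for m > 1;
  the value at 0 and 1 is irrelevant for F below).\<close>
definition f :: "nat \<Rightarrow> nat" where
  "f m = (if prime m then m - 1 else m - ld m)"

text \<open>F m: iterates of f from m up to and including the first occurrence of 1.\<close>
definition Fset :: "nat \<Rightarrow> nat set" where
  "Fset m = {(f ^^ i) m | i. \<forall>j<i. (f ^^ j) m \<noteq> 1}"

definition Dset :: "nat \<Rightarrow> nat set" where
  "Dset m = {d. d dvd m}"

end

theory Submission
  imports Defs
begin


lemma ld_props:
  assumes "m > 1" "\<not> prime m"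
  shows "ld m dvd m \<and> 1 < ld m \<and> ld m < m"
proof -
  let ?S = "{d. d dvd m \<and> 1 < d \<and> d < m}"
  have fin: "finite ?S" by (rule finite_subset[of _ "{..<m}"]) auto
  obtain d where "d dvd m" "d \<noteq> 1" "d \<noteq> m" using assms prime_nat_iff by auto
  moreover have "d \<le> m" using \<open>d dvd m\<close> assms by (simp add: dvd_imp_le)
  moreover have "d \<noteq> 0" using \<open>d dvd m\<close> assms by auto
  ultimately have "d \<in> ?S" by auto
  hence "ld m \<in> ?S" unfolding ld_def using fin by (intro Max_in) auto
  thus ?thesis by auto
qed

lemma ld_even:
  assumes "2 dvd x" "x > 2"
  shows "ld x = x div 2"
  unfolding ld_def
proof (rule Max_eqI)
  show "finite {d. d dvd x \<and> 1 < d \<and> d < x}" by (rule finite_subset[of _ "{..<x}"]) auto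
next
  fix d assume "d \<in> {d. d dvd x \<and> 1 < d \<and> d < x}"
  then obtain e where e: "x = d * e" "1 < d" "d < x" by auto
  then have "e \<ge> 2" by (cases e; cases "e - 1") auto
  hence "d * 2 \<le> x" using e by simp
  thus "d \<le> x div 2" by simp
next
  show "x div 2 \<in> {d. d dvd x \<and> 1 < d \<and> d < x}" using assms by auto
qed

lemma ld_pow:
  assumes "prime q" "j \<ge> 2"
  shows "ld (q ^ j) = q ^ (j - 1)"
  unfolding ld_def
proof (rule Max_eqI)
  show "finite {d. d dvd q ^ j \<and> 1 < d \<and> d < q ^ j}" by (rule finite_subset[of _ "{..<q^j}"]) auto
next
  have q: "q > 1" using assms prime_gt_1_nat by blast
  fix d assume "d \<in> {d. d dvd q ^ j \<and> 1 < d \<and> d < q ^ j}"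
  then obtain i where "i \<le> j" "d = q ^ i" "d < q ^ j" using divides_primepow_nat[OF assms(1)] by auto
  hence "i < j" using q by (metis leD le_less power_increasing_iff)
  thus "d \<le> q ^ (j - 1)" using \<open>d = q ^ i\<close> q using power_increasing[of i "j - 1" q] by linarith
next
  have q: "q > 1" using assms prime_gt_1_nat by blast
  show "q ^ (j - 1) \<in> {d. d dvd q ^ j \<and> 1 < d \<and> d < q ^ j}" using assms q
    using one_less_power[of q "j - 1"] power_strict_increasing[of "j - 1" j q]
    by (auto intro: le_imp_power_dvd)
qed

lemma f_prime: "prime m \<Longrightarrow> f m = m - 1"
  unfolding f_def by (rule if_P)

lemma f_nonprime: "\<not> prime m \<Longrightarrow> f m = m - ld m"
  unfolding f_def by (rule if_not_P)

lemma f_pow: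
  assumes "prime q" "j \<ge> 1"
  shows "f (q ^ j) = q ^ (j - 1) * (q - 1)"
proof (cases "j = 1")
  case True thus ?thesis using assms f_prime[of q] by simp
next
  case False
  hence j: "j \<ge> 2" using assms by auto
  have q: "q > 1" using assms prime_gt_1_nat by blast
  have np: "\<not> prime (q ^ j)" using j by (simp add: prime_power_iff)
  have "q ^ j = q ^ (j - 1) * q" using j by (cases j) auto
  thus ?thesis using f_nonprime[OF np] ld_pow[OF assms(1) j] by (simp add: diff_mult_distrib2)
qed

lemma f_even:
  assumes "2 dvd x" "x \<ge> 2"
  shows "f x = x div 2"
proof (cases "x = 2")
  case True thus ?thesis using f_prime[OF two_is_prime_nat] by simp
next
  case False
  have np: "\<not> prime x"
  proof
    assume "prime x"
    hence "2 = x" using primes_dvd_imp_eq[OF two_is_prime_nat _ assms(1)] by simp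
    thus False using False by simp
  qed
  have x2: "x > 2" using False assms(2) by linarith
  have "ld x = x div 2" using ld_even[OF assms(1) x2] .
  hence "f x = x - x div 2" using f_nonprime[OF np] by simp
  also have "\<dots> = x div 2" using assms(1) by (elim evenE) simp
  finally show ?thesis .
qed

lemma f_dvd_even:
  assumes "m > 1" "f m dvd m"
  shows "2 dvd m"
proof (cases "prime m")
  case True
  hence "m - 1 dvd m" using assms f_prime[of m] by simp
  hence "m - 1 dvd m - (m - 1)" by (simp add: dvd_diff_nat)
  hence "m - 1 dvd 1" using assms by simp
  hence "m = 2" using assms by simp
  thus ?thesis by simp
next
  case False
  obtain d where dd: "d = ld m" by blast
  have p: "d dvd m" "1 < d" "d < m" using ld_props[OF assms(1) False] dd by auto
  then obtain e where e: "m = d * e" by blast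
  have e2: "e \<ge> 2" using p e by (cases e; cases "e - 1") auto
  have "f m = m - d" using f_nonprime[OF False] dd by simp
  also have "\<dots> = d * (e - 1)" using e by (simp add: diff_mult_distrib2)
  finally have "d * (e - 1) dvd d * e" using assms(2) e by simp
  hence "e - 1 dvd e" using p by (simp add: dvd_mult_cancel_left)
  hence "e - 1 dvd e - (e - 1)" by (simp add: dvd_diff_nat)
  hence "e = 2" using e2 by simp
  hence "m = 2 * d" using e by simp
  thus ?thesis by (rule dvdI)
qed

lemma Fset_sub:
  assumes "n \<in> S" "\<And>x. x \<in> S \<Longrightarrow> x \<noteq> 1 \<Longrightarrow> f x \<in> S"
  shows "Fset n \<subseteq> S"
proof -
  have "\<forall>j<i. (f ^^ j) n \<noteq> 1 \<Longrightarrow> (f ^^ i) n \<in> S" for i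
    by (induction i) (auto simp: assms)
  thus ?thesis unfolding Fset_def by auto
qed

lemma Fset_mem: "\<forall>j<i. (f ^^ j) n \<noteq> 1 \<Longrightarrow> (f ^^ i) n \<in> Fset n"
  unfolding Fset_def by auto



lemma iter_pow2: "i \<le> k \<Longrightarrow> (f ^^ i) ((2::nat) ^ k) = 2 ^ (k - i)"
proof (induction i)
  case 0 thus ?case by simp
next
  case (Suc i)
  hence h: "(f ^^ i) (2 ^ k) = 2 ^ (k - i)" "k - i \<ge> 1" by auto
  then obtain c where c: "k - i = Suc c" by (cases "k - i") auto
  have "f ((2::nat) ^ Suc c) = 2 ^ c" by (subst f_even) auto
  moreover have "k - Suc i = c" using c by simp
  ultimately show ?case using h c by simp
qed

lemma pow2_F:
  shows "Fset ((2::nat) ^ k) = Dset (2 ^ k)"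
proof
  show "Fset (2 ^ k) \<subseteq> Dset (2 ^ k)"
  proof
    fix x assume "x \<in> Fset (2 ^ k)"
    then obtain i where i: "x = (f ^^ i) (2 ^ k)" "\<forall>j<i. (f ^^ j) (2 ^ k) \<noteq> 1"
      unfolding Fset_def by blast
    have "i \<le> k"
    proof (rule ccontr)
      assume "\<not> i \<le> k"
      hence "(f ^^ k) (2 ^ k) \<noteq> 1" using i by auto
      thus False using iter_pow2[of k k] by simp
    qed
    hence "x = 2 ^ (k - i)" using i iter_pow2 by simp
    thus "x \<in> Dset (2 ^ k)" unfolding Dset_def by (simp add: le_imp_power_dvd)
  qed
next
  show "Dset (2 ^ k) \<subseteq> Fset (2 ^ k)"
  proof
    fix x assume "x \<in> Dset ((2::nat) ^ k)"
    then obtain m where m: "m \<le> k" "x = 2 ^ m" unfolding Dset_def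
      using divides_primepow_nat[of 2] by auto
    have "\<forall>j<k - m. (f ^^ j) ((2::nat) ^ k) \<noteq> 1" using iter_pow2 by auto
    hence "(f ^^ (k - m)) (2 ^ k) \<in> Fset (2 ^ k)" by (rule Fset_mem)
    thus "x \<in> Fset (2 ^ k)" using iter_pow2[of "k - m" k] m by simp
  qed
qed

lemma first_step_even:
  assumes "n > 1" "Fset n = Dset n"
  shows "2 dvd n"
proof -
  have "\<forall>j<1. (f ^^ j) n \<noteq> 1" using assms by auto
  hence "(f ^^ 1) n \<in> Fset n" by (rule Fset_mem)
  hence "f n dvd n" using assms unfolding Dset_def by simp
  thus ?thesis using f_dvd_even assms by blast
qed



lemma f_2q:
  assumes "i \<ge> 1" "m \<ge> 1"
  shows "f ((2::nat) ^ i * m) = 2 ^ (i - 1) * m"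
proof -
  obtain c where c: "i = Suc c" using assms by (cases i) auto
  have x: "(2::nat) ^ i * m = 2 * (2 ^ c * m)" using c by simp
  have "2 ^ c * m \<ge> (1::nat)" using assms by simp
  hence "2 * (2 ^ c * m) \<ge> (2::nat)" by linarith
  moreover have "even (2 * (2 ^ c * m::nat))" by (rule dvd_triv_left)
  ultimately have "f (2 * (2 ^ c * m)) = 2 * (2 ^ c * m) div 2" using f_even by blast
  moreover have "2 * (2 ^ c * m) div 2 = 2 ^ (i - 1) * (m::nat)" using c by simp
  ultimately show ?thesis using x by metis
qed
lemma iter_2q:
  assumes "b \<ge> 1" "prime q"
  shows "i \<le> a \<Longrightarrow> (f ^^ i) ((2::nat) ^ a * q ^ b) = 2 ^ (a - i) * q ^ b"
proof (induction i)
  case 0 thus ?case by simp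
next
  case (Suc i)
  hence h: "(f ^^ i) (2 ^ a * q ^ b) = 2 ^ (a - i) * q ^ b" "a - i \<ge> 1" by auto
  then obtain c where c: "a - i = Suc c" by (cases "a - i") auto
  have qb: "q ^ b \<ge> 1" using assms prime_gt_0_nat by (simp add: Suc_leI)
  have "(f ^^ Suc i) (2 ^ a * q ^ b) = f ((f ^^ i) (2 ^ a * q ^ b))" by simp
  also have "\<dots> = f (2 ^ Suc c * q ^ b)" using h(1) c by (simp only:)
  also have "\<dots> = 2 ^ (Suc c - 1) * q ^ b" using qb by (intro f_2q) auto
  also have "\<dots> = 2 ^ (a - Suc i) * q ^ b" using c by (simp add: diff_Suc split: nat.split)
  finally show ?case .
qed

lemma partb:
  assumes q: "prime q" "q \<noteq> 2" and ab: "a \<ge> 1" "b \<ge> 1"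
    and F: "Fset ((2::nat) ^ a * q ^ b) = Dset (2 ^ a * q ^ b)"
  shows "\<exists>k j. k > 0 \<and> j > 0 \<and> prime ((2::nat) ^ k + 1) \<and> 2 ^ a * q ^ b = 2 ^ k * (2 ^ k + 1) ^ j"
proof -
  let ?n = "(2::nat) ^ a * q ^ b"
  have "q \<ge> 2" using prime_ge_2_nat q(1) by blast
  hence q2: "q > 2" using q(2) by linarith
  have qodd: "odd q" using prime_odd_nat q q2 by blast
  have qb1: "q ^ b > 1" using one_less_power[of q b] q2 ab by linarith
  have "\<forall>j<Suc a. (f ^^ j) ?n \<noteq> 1"
  proof (intro allI impI)
    fix j assume "j < Suc a"
    hence "(f ^^ j) ?n = 2 ^ (a - j) * q ^ b" using iter_2q ab q by simp
    moreover have "q ^ b \<le> 2 ^ (a - j) * q ^ b" by simp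
    hence "2 ^ (a - j) * q ^ b > (1::nat)" using qb1 by linarith
    ultimately show "(f ^^ j) ?n \<noteq> 1" by linarith
  qed
  hence "(f ^^ Suc a) ?n \<in> Fset ?n" by (rule Fset_mem)
  moreover have "(f ^^ Suc a) ?n = q ^ (b - 1) * (q - 1)"
    using iter_2q[of b q a a] ab q f_pow[of q b] by simp
  ultimately have "q ^ (b - 1) * (q - 1) dvd ?n" using F unfolding Dset_def by simp
  hence "q - 1 dvd ?n" using dvd_mult_right by blast
  moreover have "coprime (q - 1) (q ^ b)" using coprime_diff_one_left_nat[of q] q2
    by (simp add: coprime_power_right_iff)
  ultimately have "q - 1 dvd 2 ^ a" using coprime_dvd_mult_left_iff by blast
  then obtain k where k: "k \<le> a" "q - 1 = 2 ^ k" using divides_primepow_nat[of 2] by auto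
  have k1: "k \<ge> 1" using k q2 by (cases k) auto
  have qk: "q = 2 ^ k + 1" using k q2 by simp
  define S where "S = {(2::nat) ^ i * q ^ b | i. i \<le> a} \<union> {2 ^ i * q ^ j | i j. j < b \<and> i \<le> k}"
  have fq: "f (q ^ j) = 2 ^ k * q ^ (j - 1)" if "j \<ge> 1" for j
    using f_pow[OF q(1) that] k by simp
  have "Fset ?n \<subseteq> S"
  proof (rule Fset_sub)
    show "?n \<in> S" unfolding S_def by blast
  next
    fix x assume x: "x \<in> S" "x \<noteq> 1"
    show "f x \<in> S"
    proof (cases "x \<in> {(2::nat) ^ i * q ^ b | i. i \<le> a}")
      case True
      then obtain i where i: "i \<le> a" "x = 2 ^ i * q ^ b" by blast
      show ?thesis
      proof (cases "i = 0")
        case True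
        hence "f x = 2 ^ k * q ^ (b - 1)" using i fq ab by simp
        moreover have "b - 1 < b" using ab by simp
        ultimately show ?thesis unfolding S_def by blast
      next
        case False
        hence "f x = 2 ^ (i - 1) * q ^ b" using i f_2q[of i "q ^ b"] qb1 by simp
        moreover have "i - 1 \<le> a" using i by simp
        ultimately show ?thesis unfolding S_def by blast
      qed
    next
      case False
      then obtain i j where i: "j < b" "i \<le> k" "x = 2 ^ i * q ^ j" using x unfolding S_def by blast
      show ?thesis
      proof (cases "i = 0")
        case True
        hence j: "j \<ge> 1" using i x by (cases j) auto
        hence "f x = 2 ^ k * q ^ (j - 1)" using True i fq by simp
        moreover have "j - 1 < b" using i by simp
        ultimately show ?thesis unfolding S_def by blast
      next
        case False
        have "q ^ j \<ge> 1" using q2 by simp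
        hence "f x = 2 ^ (i - 1) * q ^ j" using i f_2q[of i "q ^ j"] False by simp
        moreover have "i - 1 \<le> k" using i by simp
        ultimately show ?thesis using i unfolding S_def by blast
      qed
    qed
  qed
  moreover have "2 ^ a * q ^ (b - 1) \<in> Dset ?n" unfolding Dset_def
    using ab by (simp add: le_imp_power_dvd)
  ultimately have mem: "2 ^ a * q ^ (b - 1) \<in> S" using F by blast
  have "a \<le> k"
  proof (cases "2 ^ a * q ^ (b - 1) \<in> {(2::nat) ^ i * q ^ b | i. i \<le> a}")
    case True
    then obtain i where "2 ^ a * q ^ (b - 1) = 2 ^ i * q ^ b" by blast
    moreover have "q ^ b = q ^ (b - 1) * q" using ab by (cases b) auto
    ultimately have "q ^ (b - 1) * 2 ^ a = q ^ (b - 1) * (2 ^ i * q)" by (simp add: ac_simps)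
    hence "2 ^ a = 2 ^ i * q" using q2 by simp
    hence "q dvd 2 ^ a" by simp
    hence "q dvd 2" using q prime_dvd_power by blast
    thus ?thesis using q2 by (simp add: dvd_imp_le leD)
  next
    case False
    then obtain i j where i: "j < b" "i \<le> k" "2 ^ a * q ^ (b - 1) = 2 ^ i * q ^ j"
      using mem unfolding S_def by blast
    show ?thesis
    proof (rule ccontr)
      assume "\<not> a \<le> k"
      hence ai: "a > i" using i by simp
      have "2 ^ a = 2 ^ i * (2::nat) ^ (a - i)" using ai by (simp flip: power_add)
      hence "2 ^ i * (2 ^ (a - i) * q ^ (b - 1)) = 2 ^ i * q ^ j" using i by (simp add: ac_simps)
      hence e: "2 ^ (a - i) * q ^ (b - 1) = q ^ j" by simp
      have "even (2 ^ (a - i) * q ^ (b - 1))" using ai by simp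
      moreover have "odd (q ^ j)" using qodd by simp
      ultimately show False using e by metis
    qed
  qed
  hence "a = k" using k by simp
  thus ?thesis using k1 ab q qk by (intro exI[of _ k] exI[of _ b]) auto
qed



theorem mainTheorem10:
  shows "(\<forall>n::nat. n > 1 \<and> card (prime_factors n) = 1 \<longrightarrow>
            (Fset n = Dset n \<longleftrightarrow> (\<exists>k\<ge>1. n = 2 ^ k)))
       \<and> (\<forall>n::nat. n > 1 \<and> card (prime_factors n) = 2 \<and> Fset n = Dset n \<longrightarrow>
            (\<exists>k j. k > 0 \<and> j > 0 \<and> prime ((2::nat) ^ k + 1) \<and> n = 2 ^ k * (2 ^ k + 1) ^ j))"
proof (intro conjI allI impI)
  fix n :: nat assume H: "n > 1 \<and> card (prime_factors n) = 1"
  hence n1: "n > 1" and c1: "card (prime_factors n) = 1" by auto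
  obtain p where P: "prime_factors n = {p}" using c1 card_1_singletonE by blast
  have "p \<in> prime_factors n" using P by simp
  hence pp: "prime p" and pd: "p dvd n" using in_prime_factors_iff by auto
  have nf: "n = p ^ multiplicity p n" using prime_factorization_nat[of n] n1 P by simp
  have m: "multiplicity p n > 0" using prime_multiplicity_gt_zero_iff[of p n] pp pd n1 by simp
  show "Fset n = Dset n \<longleftrightarrow> (\<exists>k\<ge>1. n = 2 ^ k)"
  proof
    assume F: "Fset n = Dset n"
    have "2 dvd n" using first_step_even[OF n1 F] .
    hence "2 \<in> prime_factors n" using n1 by (simp add: in_prime_factors_iff)
    hence "p = 2" using P by simp
    thus "\<exists>k\<ge>1. n = 2 ^ k" using nf m by (intro exI[of _ "multiplicity p n"]) simp
  next
    assume "\<exists>k\<ge>1. n = 2 ^ k"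
    then obtain k where "n = 2 ^ k" by blast
    thus "Fset n = Dset n" using pow2_F by simp
  qed
next
  fix n :: nat assume H: "n > 1 \<and> card (prime_factors n) = 2 \<and> Fset n = Dset n"
  hence n1: "n > 1" and c2: "card (prime_factors n) = 2" and F: "Fset n = Dset n" by auto
  have "2 dvd n" using first_step_even[OF n1 F] .
  hence two: "2 \<in> prime_factors n" using n1 by (simp add: in_prime_factors_iff)
  obtain x y where xy: "prime_factors n = {x, y}" "x \<noteq> y"
    using iffD1[OF card_2_iff c2] by (elim exE conjE)
  obtain q where Q: "prime_factors n = {2, q}" "q \<noteq> 2"
  proof (cases "x = 2")
    case True thus ?thesis using that[of y] xy by simp
  next
    case False
    hence "y = 2" using two xy(1) by simp
    thus ?thesis using that xy False by (simp add: insert_commute)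
  qed
  have "q \<in> prime_factors n" using Q by simp
  hence qp: "prime q" and qd: "q dvd n" using in_prime_factors_iff by auto
  have nf: "n = 2 ^ multiplicity 2 n * q ^ multiplicity q n"
    using prime_factorization_nat[of n] n1 Q by simp
  have a: "multiplicity 2 n \<ge> 1" using prime_multiplicity_gt_zero_iff[of 2 n] \<open>2 dvd n\<close> n1 by simp
  have b: "multiplicity q n \<ge> 1" using prime_multiplicity_gt_zero_iff[of q n] qp qd n1 by simp
  have F': "Fset (2 ^ multiplicity 2 n * q ^ multiplicity q n) = Dset (2 ^ multiplicity 2 n * q ^ multiplicity q n)"
    using F nf by simp
  show "\<exists>k j. k > 0 \<and> j > 0 \<and> prime ((2::nat) ^ k + 1) \<and> n = 2 ^ k * (2 ^ k + 1) ^ j"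
    using partb[OF qp Q(2) a b F'] nf by simp
qed


end
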